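(* Let $\theta:\mathbb{A}\to\mathbb{A}^\lambda$ be a primitive substitution satisfying the standing assumptions, with height $h=h(\theta)$ and pure base $\theta^{(h)}$. Then $c(\theta)=h(\theta)\cdot c(\theta^{(h)})$. In particular $h(\theta)\mid c(\theta)$.
   Context: Substitution $\theta:\mathbb{A}\to\mathbb{A}^\lambda$ of constant length $\lambda\ge2$, extended by concatenation; primitive: some iterate $\theta^k(a)$ contains all letters for each $a$. Standing assumptions: $\theta(a_0)_0=a_0$ for some $a_0$, $\theta$ injective on letters, subshift infinite; $u$ the fixed point with $u[0]=a_0$. Height $h(\theta)=\max\{m\ge1:\gcd(m,\lambda)=1,\ m\mid\gcd\{r\ge1:u[r]=u[0]\}\}$; column number $c(\theta)=\min_{k\ge1,0\le j<\lambda^k}|\{\theta^k(a)_j:a\in\mathbb{A}\}|$ (for any primitive substitution these are defined analogously, using a fixed point of a suitable power). Pure base: let $\mathbb{A}^{(h)}=\{u[mh,mh+h-1]:m\ge0\}\subset\mathbb{A}^h$ and define $\theta^{(h)}:\mathbb{A}^{(h)}\to(\mathbb{A}^{(h)})^\lambda$ by $\theta^{(h)}(w)_j=\theta(w)[jh,(j+1)h-1]$ for $0\le j<\lambda$ (here $\theta(w)$ is the concatenation $\theta(w_0)\cdots\theta(w_{h-1})$ of length $\lambda h$); $\theta^{(h)}$ is a primitive substitution of length $\lambda$. *)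

theory Defs
  imports Main
begin

definition subst_word :: "('a \<Rightarrow> 'a list) \<Rightarrow> 'a list \<Rightarrow> 'a list" where
  "subst_word \<theta> w = concat (map \<theta> w)"

definition subst_iter :: "('a \<Rightarrow> 'a list) \<Rightarrow> nat \<Rightarrow> 'a \<Rightarrow> 'a list" where
  "subst_iter \<theta> k a = (subst_word \<theta> ^^ k) [a]"

definition const_length_subst :: "'a set \<Rightarrow> nat \<Rightarrow> ('a \<Rightarrow> 'a list) \<Rightarrow> bool" where
  "const_length_subst A lam \<theta> \<longleftrightarrow> finite A \<and> A \<noteq> {} \<and> lam \<ge> 2 \<and>
     (\<forall>a\<in>A. length (\<theta> a) = lam \<and> set (\<theta> a) \<subseteq> A)"

definition primitive_subst :: "'a set \<Rightarrow> nat \<Rightarrow> ('a \<Rightarrow> 'a list) \<Rightarrow> bool" where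
  "primitive_subst A lam \<theta> \<longleftrightarrow> const_length_subst A lam \<theta> \<and>
     (\<exists>k\<ge>1. \<forall>a\<in>A. set (subst_iter \<theta> k a) = A)"

definition is_factor :: "'a list \<Rightarrow> 'a list \<Rightarrow> bool" where
  "is_factor w v \<longleftrightarrow> (\<exists>p s. v = p @ w @ s)"

definition subst_language :: "'a set \<Rightarrow> ('a \<Rightarrow> 'a list) \<Rightarrow> 'a list set" where
  "subst_language A \<theta> = {w. \<exists>a\<in>A. \<exists>k. is_factor w (subst_iter \<theta> k a)}"

definition subshift :: "'a set \<Rightarrow> ('a \<Rightarrow> 'a list) \<Rightarrow> (int \<Rightarrow> 'a) set" where
  "subshift A \<theta> = {x. \<forall>i n. map (\<lambda>t. x (i + int t)) [0..<n] \<in> subst_language A \<theta>}"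

text \<open>The one-sided fixed point u = lim theta^n(a0) (when theta(a0)_0 = a0):
  u[n] is the n-th letter of theta^(n+1)(a0), which has length lam^(n+1) > n.\<close>
definition fixed_point :: "('a \<Rightarrow> 'a list) \<Rightarrow> 'a \<Rightarrow> nat \<Rightarrow> 'a" where
  "fixed_point \<theta> a0 n = subst_iter \<theta> (Suc n) a0 ! n"

definition height :: "nat \<Rightarrow> ('a \<Rightarrow> 'a list) \<Rightarrow> 'a \<Rightarrow> nat" where
  "height lam \<theta> a0 = (GREATEST m. m \<ge> 1 \<and> coprime m lam \<and>
      m dvd Gcd {r. r \<ge> 1 \<and> fixed_point \<theta> a0 r = fixed_point \<theta> a0 0})"

definition column_number :: "'a set \<Rightarrow> nat \<Rightarrow> ('a \<Rightarrow> 'a list) \<Rightarrow> nat" where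
  "column_number A lam \<theta> = Min {card ((\<lambda>a. subst_iter \<theta> k a ! j) ` A) | k j. k \<ge> 1 \<and> j < lam ^ k}"

definition pure_base_alphabet :: "('a \<Rightarrow> 'a list) \<Rightarrow> 'a \<Rightarrow> nat \<Rightarrow> 'a list set" where
  "pure_base_alphabet \<theta> a0 h = {map (fixed_point \<theta> a0) [m * h..<m * h + h] | m. True}"

definition pure_base :: "nat \<Rightarrow> ('a \<Rightarrow> 'a list) \<Rightarrow> nat \<Rightarrow> 'a list \<Rightarrow> 'a list list" where
  "pure_base lam \<theta> h w = map (\<lambda>j. take h (drop (j * h) (subst_word \<theta> w))) [0..<lam]"

end

theory Submission
  imports Defs
begin

lemma sw_Nil[simp]: "subst_word \<theta> [] = []" by (simp add: subst_word_def)
lemma sw_Cons: "subst_word \<theta> (x#xs) = \<theta> x @ subst_word \<theta> xs" by (simp add: subst_word_def)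
lemma sw_append: "subst_word \<theta> (xs @ ys) = subst_word \<theta> xs @ subst_word \<theta> ys"
  by (simp add: subst_word_def)
lemma swk_append: "(subst_word \<theta> ^^ k) (xs @ ys) = (subst_word \<theta> ^^ k) xs @ (subst_word \<theta> ^^ k) ys"
  by (induction k) (simp_all add: sw_append)
lemma swk_Nil[simp]: "(subst_word \<theta> ^^ k) [] = []"
  by (induction k) simp_all
lemma swk_concat: "(subst_word \<theta> ^^ k) w = concat (map (subst_iter \<theta> k) w)"
proof (induction w)
  case Nil then show ?case by simp
next
  case (Cons x w)
  have "(subst_word \<theta> ^^ k) (x # w) = (subst_word \<theta> ^^ k) ([x] @ w)" by simp
  also have "\<dots> = subst_iter \<theta> k x @ (subst_word \<theta> ^^ k) w"
    by (simp only: swk_append subst_iter_def)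
  finally show ?case using Cons by simp
qed

lemma concat_nth_block:
  assumes "\<forall>x\<in>set xs. length x = L" "i < length xs" "r < L"
  shows "concat xs ! (i*L + r) = xs!i!r"
  using assms
proof (induction xs arbitrary: i)
  case Nil then show ?case by simp
next
  case (Cons x xs)
  show ?case
  proof (cases i)
    case 0 then show ?thesis using Cons.prems by (simp add: nth_append)
  next
    case (Suc i')
    have "concat (x#xs) ! (i*L + r) = concat xs ! (i'*L + r)"
      using Cons.prems Suc by (simp add: nth_append)
    then show ?thesis using Cons Suc by simp
  qed
qed

lemma concat_take_block:
  assumes "\<forall>x\<in>set W. length x = h" "j < length W"
  shows "take h (drop (j*h) (concat W)) = W!j"
  using assms
proof (induction W arbitrary: j)
  case Nil then show ?case by simp
next
  case (Cons x W)
  show ?case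
  proof (cases j)
    case 0 then show ?thesis using Cons.prems by simp
  next
    case (Suc j')
    then show ?thesis using Cons by (simp add: add.commute)
  qed
qed

lemma concat_blocks:
  "length xs = n*h \<Longrightarrow> concat (map (\<lambda>j. take h (drop (j*h) xs)) [0..<n]) = xs"
proof (induction n arbitrary: xs)
  case 0 then show ?case by simp
next
  case (Suc n)
  have e: "[0..<Suc n] = 0 # map Suc [0..<n]" by (simp add: map_Suc_upt upt_conv_Cons)
  have "concat (map (\<lambda>j. take h (drop (j*h) xs)) [0..<Suc n])
      = take h xs @ concat (map (\<lambda>j. take h (drop (j*h) (drop h xs))) [0..<n])"
    unfolding e by (simp del: upt_Suc add: o_def add.commute)
  also have "\<dots> = take h xs @ drop h xs" using Suc.IH[of "drop h xs"] Suc.prems by simp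
  finally show ?case by simp
qed

lemma sw_concat: "subst_word \<theta> (concat L) = concat (map (subst_word \<theta>) L)"
  by (induction L) (simp_all add: sw_append)

locale csub =
  fixes A :: "'a set" and lam :: nat and \<theta> :: "'a \<Rightarrow> 'a list" and a0 :: 'a
  assumes prim: "primitive_subst A lam \<theta>" and a0A: "a0 \<in> A" and fix0: "\<theta> a0 ! 0 = a0"
begin

lemma finA: "finite A" and lam2: "lam \<ge> 2" and lenth: "a \<in> A \<Longrightarrow> length (\<theta> a) = lam"
  and setth: "a \<in> A \<Longrightarrow> set (\<theta> a) \<subseteq> A"
  using prim by (auto simp: primitive_subst_def const_length_subst_def)

lemma primk: obtains k0 where "k0 \<ge> 1" "\<And>a. a \<in> A \<Longrightarrow> set (subst_iter \<theta> k0 a) = A"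
  using prim unfolding primitive_subst_def by blast

lemma sw_props: "set v \<subseteq> A \<Longrightarrow> length (subst_word \<theta> v) = lam * length v \<and> set (subst_word \<theta> v) \<subseteq> A"
  by (induction v) (auto simp: sw_Cons lenth dest: setth)

lemma swk_props: "set v \<subseteq> A \<Longrightarrow> length ((subst_word \<theta> ^^ k) v) = lam^k * length v \<and> set ((subst_word \<theta> ^^ k) v) \<subseteq> A"
proof (induction k)
  case 0 then show ?case by simp
next
  case (Suc k)
  then show ?case using sw_props[of "(subst_word \<theta> ^^ k) v"] by simp
qed

lemma si_len: "a \<in> A \<Longrightarrow> length (subst_iter \<theta> k a) = lam^k"
  using swk_props[of "[a]" k] by (simp add: subst_iter_def)
lemma si_set: "a \<in> A \<Longrightarrow> set (subst_iter \<theta> k a) \<subseteq> A"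
  using swk_props[of "[a]" k] by (simp add: subst_iter_def)

lemma swk_nth:
  assumes "set w \<subseteq> A" "i < length w" "r < lam^k"
  shows "(subst_word \<theta> ^^ k) w ! (i*lam^k + r) = subst_iter \<theta> k (w!i) ! r"
proof -
  have "concat (map (subst_iter \<theta> k) w) ! (i*lam^k + r) = map (subst_iter \<theta> k) w ! i ! r"
    by (rule concat_nth_block) (use assms si_len in auto)
  then show ?thesis unfolding swk_concat using assms by simp
qed

lemma si_add: "subst_iter \<theta> (K + k) a = (subst_word \<theta> ^^ k) (subst_iter \<theta> K a)"
  unfolding subst_iter_def by (metis add.commute comp_apply funpow_add)

lemma si_comp:
  assumes "a \<in> A" "J < lam^K" "j < lam^k"
  shows "subst_iter \<theta> (K + k) a ! (J*lam^k + j) = subst_iter \<theta> k (subst_iter \<theta> K a ! J) ! j"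
  unfolding si_add using assms by (intro swk_nth) (auto simp: si_len si_set)

lemma idx_lt: "(J::nat) < lam^K \<Longrightarrow> j < lam^k \<Longrightarrow> J*lam^k + j < lam^(K+k)"
proof -
  assume a: "J < lam^K" "j < lam^k"
  have "J*lam^k + j < (J+1)*lam^k" using a by simp
  also have "\<dots> \<le> lam^K * lam^k" using a by (intro mult_right_mono) auto
  finally show ?thesis by (simp add: power_add)
qed

definition u where "u n = fixed_point \<theta> a0 n"

lemma si1: "subst_iter \<theta> 1 a = \<theta> a"
  by (simp add: subst_iter_def subst_word_def)

lemma th_a0: "\<theta> a0 = [a0] @ tl (\<theta> a0)"
proof -
  have "\<theta> a0 \<noteq> []" using lenth[OF a0A] lam2 by auto
  then show ?thesis using fix0 by (cases "\<theta> a0") auto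
qed

lemma si_prefix1: "\<exists>s. subst_iter \<theta> (Suc m) a0 = subst_iter \<theta> m a0 @ s"
proof -
  have "subst_iter \<theta> (1 + m) a0 = (subst_word \<theta> ^^ m) ([a0] @ tl (\<theta> a0))"
    unfolding si_add si1 using th_a0 by simp
  also have "\<dots> = subst_iter \<theta> m a0 @ (subst_word \<theta> ^^ m) (tl (\<theta> a0))"
    by (simp only: swk_append subst_iter_def)
  finally show ?thesis by auto
qed

lemma si_prefix: "m \<le> m' \<Longrightarrow> \<exists>s. subst_iter \<theta> m' a0 = subst_iter \<theta> m a0 @ s"
proof (induction m' rule: dec_induct)
  case base then show ?case by auto
next
  case (step n)
  then show ?case using si_prefix1[of n] by auto
qed

lemma lt_pow: "n < lam ^ Suc n"
proof -
  have "n < 2^n" by (rule less_exp)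
  also have "\<dots> \<le> lam^n" using lam2 by (intro power_mono) auto
  also have "\<dots> \<le> lam^Suc n" using lam2 by simp
  finally show ?thesis .
qed

lemma u_eq: assumes "n < lam^m" shows "u n = subst_iter \<theta> m a0 ! n"
proof -
  define M where "M = max m (Suc n)"
  obtain s1 where s1: "subst_iter \<theta> M a0 = subst_iter \<theta> m a0 @ s1"
    using si_prefix[of m M] unfolding M_def by auto
  obtain s2 where s2: "subst_iter \<theta> M a0 = subst_iter \<theta> (Suc n) a0 @ s2"
    using si_prefix[of "Suc n" M] unfolding M_def by auto
  have "u n = subst_iter \<theta> (Suc n) a0 ! n" by (simp add: u_def fixed_point_def)
  also have "\<dots> = subst_iter \<theta> M a0 ! n" using s2 lt_pow si_len[OF a0A] by (simp add: nth_append)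
  also have "\<dots> = subst_iter \<theta> m a0 ! n" using s1 assms si_len[OF a0A] by (simp add: nth_append)
  finally show ?thesis .
qed

lemma u_A: "u n \<in> A"
  using u_eq[OF lt_pow] si_set[OF a0A] si_len[OF a0A] lt_pow nth_mem by (metis subsetD)

lemma u_F1: assumes "r < lam^k" shows "u (n*lam^k + r) = subst_iter \<theta> k (u n) ! r"
proof -
  have i: "n*lam^k + r < lam^(Suc n + k)" using idx_lt[OF lt_pow assms] .
  have "u (n*lam^k + r) = subst_iter \<theta> (Suc n + k) a0 ! (n*lam^k + r)" using u_eq[OF i] .
  also have "\<dots> = subst_iter \<theta> k (subst_iter \<theta> (Suc n) a0 ! n) ! r"
    by (rule si_comp) (use a0A lt_pow assms in auto)
  also have "\<dots> = subst_iter \<theta> k (u n) ! r" using u_eq[OF lt_pow] by simp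
  finally show ?thesis .
qed

lemma u0: "u 0 = a0"
  using u_eq[of 0 1] lam2 fix0 si1[of a0] by simp

lemma u_occ: assumes "a \<in> A" obtains n where "u n = a"
proof -
  obtain k0 where k0: "k0 \<ge> 1" "\<And>a. a \<in> A \<Longrightarrow> set (subst_iter \<theta> k0 a) = A" using primk by blast
  have "a \<in> set (subst_iter \<theta> k0 a0)" using k0 a0A assms by auto
  then obtain n where "n < lam^k0" "subst_iter \<theta> k0 a0 ! n = a"
    using si_len[OF a0A] by (auto simp: in_set_conv_nth)
  then show ?thesis using that u_eq by metis
qed

lemma hit: assumes "b \<in> A" obtains k p where "p < lam^k" "subst_iter \<theta> k b ! p = a0"
proof -
  obtain k0 where k0: "k0 \<ge> 1" "\<And>a. a \<in> A \<Longrightarrow> set (subst_iter \<theta> k0 a) = A" using primk by blast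
  have "a0 \<in> set (subst_iter \<theta> k0 b)" using k0 a0A assms by auto
  then obtain n where "n < lam^k0" "subst_iter \<theta> k0 b ! n = a0"
    using si_len[OF assms] by (auto simp: in_set_conv_nth)
  then show ?thesis using that by blast
qed

definition R where "R = {r. r \<ge> 1 \<and> fixed_point \<theta> a0 r = fixed_point \<theta> a0 0}"
definition g where "g = Gcd R"
definition h where "h = height lam \<theta> a0"

lemma g_dvd: "u n = a0 \<Longrightarrow> g dvd n"
proof (cases "n = 0")
  case False
  assume "u n = a0"
  then have "n \<in> R" using False u0 by (auto simp: R_def u_def)
  then show ?thesis unfolding g_def by (rule Gcd_dvd)
qed simp

lemma g_pos: "g \<noteq> 0"
proof -
  obtain k p where kp: "p < lam^k" "subst_iter \<theta> k (u 1) ! p = a0" using hit[OF u_A] by blast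
  have "u (1*lam^k + p) = a0" using u_F1[OF kp(1), of 1] kp(2) by simp
  then have "g dvd (1*lam^k + p)" by (rule g_dvd)
  moreover have "1*lam^k + p \<noteq> 0" using lam2 by simp
  ultimately show ?thesis by (metis dvd_0_left_iff)
qed

lemma h_props: "h \<ge> 1 \<and> coprime h lam \<and> h dvd g"
proof -
  let ?P = "\<lambda>m. m \<ge> 1 \<and> coprime m lam \<and> m dvd Gcd R"
  have "?P (Greatest ?P)"
  proof (rule GreatestI_nat[where k=1 and b=g])
    show "?P 1" by simp
    show "\<And>y. ?P y \<Longrightarrow> y \<le> g" using g_pos unfolding g_def by (meson dvd_imp_le neq0_conv)
  qed
  then show ?thesis unfolding h_def height_def R_def g_def by simp
qed

lemma same_mod: assumes "u n = u m" shows "n mod h = m mod h"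
proof -
  obtain k p where kp: "p < lam^k" "subst_iter \<theta> k (u n) ! p = a0" using hit[OF u_A] by blast
  have 1: "u (n*lam^k + p) = a0" using u_F1[OF kp(1)] kp(2) by simp
  have 2: "u (m*lam^k + p) = a0" using u_F1[OF kp(1)] kp(2) assms by simp
  have d1: "h dvd n*lam^k + p" using g_dvd[OF 1] h_props dvd_trans by blast
  have d2: "h dvd m*lam^k + p" using g_dvd[OF 2] h_props dvd_trans by blast
  have cp: "coprime h (lam^k)" using h_props by simp
  show ?thesis
  proof (cases "n \<le> m")
    case True
    have "h dvd (m*lam^k + p) - (n*lam^k + p)" by (rule dvd_diff_nat[OF d2 d1])
    then have "h dvd (m - n)*lam^k" by (simp add: diff_mult_distrib)
    then have "h dvd m - n" using cp by (simp add: coprime_dvd_mult_left_iff)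
    then show ?thesis using True mod_eq_dvd_iff_nat[of n m h] by simp
  next
    case False
    have "h dvd (n*lam^k + p) - (m*lam^k + p)" by (rule dvd_diff_nat[OF d1 d2])
    then have "h dvd (n - m)*lam^k" by (simp add: diff_mult_distrib)
    then have "h dvd n - m" using cp by (simp add: coprime_dvd_mult_left_iff)
    then show ?thesis using False mod_eq_dvd_iff_nat[of m n h] by simp
  qed
qed

definition cls where "cls a = (SOME n. u n = a) mod h"
definition C where "C q = {a \<in> A. cls a = q}"
definition f where "f k j a = subst_iter \<theta> k a ! j"

lemma h1: "h \<ge> 1" using h_props by simp

lemma cls_u: "cls (u n) = n mod h"
proof -
  have "u (SOME m. u m = u n) = u n" by (rule someI) simp
  then show ?thesis unfolding cls_def by (rule same_mod)
qed

lemma cls_lt: "cls a < h" unfolding cls_def using h1 by simp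

lemma f_u: "j < lam^k \<Longrightarrow> f k j (u n) = u (n*lam^k + j)"
  unfolding f_def using u_F1 by simp

lemma cls_f: assumes "a \<in> A" "j < lam^k"
  shows "f k j a \<in> A \<and> cls (f k j a) = (cls a * lam^k + j) mod h"
proof -
  obtain n where n: "u n = a" using u_occ[OF assms(1)] by blast
  have "f k j a = u (n*lam^k + j)" using f_u[OF assms(2), of n] n by simp
  moreover have "(n*lam^k + j) mod h = (n mod h * lam^k + j) mod h"
    using mod_add_left_eq[of "n mod h * lam^k" h j] mod_add_left_eq[of "n * lam^k" h j]
      mod_mult_left_eq[of n h "lam^k"] by simp
  ultimately show ?thesis using u_A[of "n*lam^k + j"] cls_u[of "n*lam^k + j"] cls_u[of n] n by simp
qed

lemma f_comp:
  assumes "a \<in> A" "J < lam^K" "j < lam^k"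
  shows "f (K + k) (J*lam^k + j) a = f k j (f K J a)"
  unfolding f_def by (rule si_comp[OF assms])

lemma A_union: "A = (\<Union>q<h. C q)"
  using cls_lt unfolding C_def by auto

lemma finC: "finite (C q)" using finA unfolding C_def by simp

lemma C_mem: assumes "q < h" shows "a \<in> C q \<longleftrightarrow> (\<exists>m. a = u (m*h + q))"
proof
  assume "a \<in> C q"
  then have aA: "a \<in> A" and cq: "cls a = q" unfolding C_def by auto
  obtain n where n: "u n = a" using u_occ[OF aA] by blast
  have "n mod h = q" using cq n cls_u[of n] by simp
  then have "n = (n div h)*h + q" by (metis div_mult_mod_eq)
  then have "a = u ((n div h)*h + q)" using n by simp
  then show "\<exists>m. a = u (m*h + q)" by blast
next
  assume "\<exists>m. a = u (m*h + q)"
  then obtain m where "a = u (m*h + q)" by blast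
  then show "a \<in> C q" using cls_u u_A assms unfolding C_def by simp
qed

lemma distinct_cls_aux:
  assumes "i < i'" "i' < h" "j < lam^k"
  shows "(i*lam^k + j) mod h \<noteq> (i'*lam^k + j) mod h"
proof
  assume e: "(i*lam^k + j) mod h = (i'*lam^k + j) mod h"
  have le: "i*lam^k + j \<le> i'*lam^k + j" using assms by simp
  have "h dvd (i'*lam^k + j) - (i*lam^k + j)" using e mod_eq_dvd_iff_nat[OF le, of h] by simp
  then have "h dvd (i' - i)*lam^k" by (simp add: diff_mult_distrib)
  then have "h dvd i' - i" using h_props by (simp add: coprime_dvd_mult_left_iff)
  moreover have "0 < i' - i" "i' - i < h" using assms by auto
  ultimately show False using dvd_imp_le[of h "i' - i"] by simp
qed

lemma distinct_cls:
  assumes "i < h" "i' < h" "i \<noteq> i'" "j < lam^k"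
  shows "(i*lam^k + j) mod h \<noteq> (i'*lam^k + j) mod h"
  using assms distinct_cls_aux by (metis linorder_neqE_nat)

lemma col_card: assumes "j < lam^k"
  shows "card (f k j ` A) = (\<Sum>q<h. card (f k j ` C q))"
proof -
  have "f k j ` A = (\<Union>q<h. f k j ` C q)" using A_union by blast
  moreover have "card (\<Union>q<h. f k j ` C q) = (\<Sum>q<h. card (f k j ` C q))"
  proof (rule card_UN_disjoint)
    show "finite {..<h}" by simp
    show "\<forall>i\<in>{..<h}. finite (f k j ` C i)" using finC by simp
    show "\<forall>i\<in>{..<h}. \<forall>i'\<in>{..<h}. i \<noteq> i' \<longrightarrow> f k j ` C i \<inter> f k j ` C i' = {}"
    proof (intro ballI impI)
      fix i i' assume ii: "i \<in> {..<h}" "i' \<in> {..<h}" "i \<noteq> i'"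
      show "f k j ` C i \<inter> f k j ` C i' = {}"
      proof (rule ccontr)
        assume "f k j ` C i \<inter> f k j ` C i' \<noteq> {}"
        then obtain a a' where aa: "a \<in> C i" "a' \<in> C i'" "f k j a = f k j a'" by blast
        have "cls (f k j a) = (i*lam^k + j) mod h" using cls_f[OF _ assms, of a] aa unfolding C_def by simp
        moreover have "cls (f k j a') = (i'*lam^k + j) mod h" using cls_f[OF _ assms, of a'] aa unfolding C_def by simp
        ultimately show False using distinct_cls[OF _ _ ii(3) assms] ii aa(3) by simp
      qed
    qed
  qed
  ultimately show ?thesis by simp
qed

definition Mset where "Mset = {card (f k j ` C q) | k j q. k \<ge> 1 \<and> j < lam^k \<and> q < h}"
definition mu where "mu = Min Mset"

lemma card_fC_le: "card (f k j ` C q) \<le> card A"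
proof -
  have "card (f k j ` C q) \<le> card (C q)" using finC by (rule card_image_le)
  also have "\<dots> \<le> card A" using finA unfolding C_def by (intro card_mono) auto
  finally show ?thesis .
qed

lemma finM: "finite Mset"
proof (rule finite_subset[of _ "{..card A}"])
  show "Mset \<subseteq> {..card A}" unfolding Mset_def using card_fC_le by auto
qed simp

lemma lam_pos: "0 < lam" using lam2 by simp

lemma mu_le: "k \<ge> 1 \<Longrightarrow> j < lam^k \<Longrightarrow> q < h \<Longrightarrow> mu \<le> card (f k j ` C q)"
  unfolding mu_def by (rule Min_le[OF finM]) (auto simp: Mset_def)

lemma mu_in: "mu \<in> Mset"
proof -
  have "card (f 1 0 ` C 0) \<in> Mset" unfolding Mset_def using h1 lam_pos by force
  then show ?thesis unfolding mu_def using finM by (intro Min_in) auto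
qed

lemma img_comp: assumes "X \<subseteq> A" "J < lam^K" "j < lam^k"
  shows "f (K + k) (J*lam^k + j) ` X = f k j ` (f K J ` X)"
proof -
  have "f k j ` (f K J ` X) = (\<lambda>a. f k j (f K J a)) ` X" by (simp add: image_image)
  also have "\<dots> = f (K + k) (J*lam^k + j) ` X"
    by (rule image_cong) (use f_comp[OF _ assms(2,3)] assms(1) in auto)
  finally show ?thesis by simp
qed

lemma mod_fix: "(x::nat) < h \<Longrightarrow> q0 < h \<Longrightarrow> (x + (q0 + h - x) mod h) mod h = q0"
  by (simp add: mod_add_right_eq)

lemma mu_all: assumes "q < h" shows "\<exists>k j. k \<ge> 1 \<and> j < lam^k \<and> card (f k j ` C q) = mu"
proof -
  obtain k0 j0 q0 where m: "mu = card (f k0 j0 ` C q0)" "k0 \<ge> 1" "j0 < lam^k0" "q0 < h"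
    using mu_in unfolding Mset_def by blast
  define K where "K = h"
  define J where "J = (q0 + h - (q*lam^K) mod h) mod h"
  have hK: "h < lam^K"
  proof -
    have "h < 2^h" by (rule less_exp)
    also have "\<dots> \<le> lam^h" using lam2 by (intro power_mono) auto
    finally show ?thesis unfolding K_def .
  qed
  have JK: "J < lam^K" unfolding J_def using hK h1
    by (meson mod_less_divisor order.strict_trans zero_less_one less_le_trans)
  have cl: "(q*lam^K + J) mod h = q0"
  proof -
    have "(q*lam^K + J) mod h = ((q*lam^K) mod h + J) mod h" by (simp add: mod_add_left_eq)
    also have "\<dots> = q0" unfolding J_def using mod_fix[of "(q*lam^K) mod h" q0] h1 m(4) by simp
    finally show ?thesis .
  qed
  have sub: "f K J ` C q \<subseteq> C q0"
  proof
    fix b assume "b \<in> f K J ` C q"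
    then obtain a where a: "a \<in> C q" "b = f K J a" by blast
    then show "b \<in> C q0" using cls_f[OF _ JK, of a] cl unfolding C_def by auto
  qed
  have eq: "f (K + k0) (J*lam^k0 + j0) ` C q = f k0 j0 ` (f K J ` C q)"
    by (rule img_comp) (use JK m in \<open>auto simp: C_def\<close>)
  have "card (f (K + k0) (J*lam^k0 + j0) ` C q) \<le> mu"
    unfolding eq m(1) using sub finC by (intro card_mono) auto
  moreover have "mu \<le> card (f (K + k0) (J*lam^k0 + j0) ` C q)"
    using mu_le[of "K + k0" "J*lam^k0 + j0" q] idx_lt[OF JK m(3)] m(2) assms by simp
  ultimately show ?thesis using idx_lt[OF JK m(3)] m(2)
    by (intro exI[of _ "K + k0"] exI[of _ "J*lam^k0 + j0"]) auto
qed

lemma good_aux: "n \<le> h \<Longrightarrow> \<exists>K J. K \<ge> 1 \<and> J < lam^K \<and> (\<forall>q<n. card (f K J ` C q) = mu)"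
proof (induction n)
  case 0 then show ?case using lam_pos by (intro exI[of _ 1] exI[of _ 0]) auto
next
  case (Suc n)
  then obtain K J where KJ: "K \<ge> 1" "J < lam^K" "\<forall>q<n. card (f K J ` C q) = mu" by auto
  define s where "s = (n*lam^K + J) mod h"
  have sh: "s < h" unfolding s_def using h1 by simp
  obtain k j where kj: "k \<ge> 1" "j < lam^k" "card (f k j ` C s) = mu" using mu_all[OF sh] by blast
  have idx: "J*lam^k + j < lam^(K+k)" using idx_lt[OF KJ(2) kj(2)] .
  have CA: "C q \<subseteq> A" for q unfolding C_def by auto
  have "card (f (K+k) (J*lam^k + j) ` C q) = mu" if q: "q < Suc n" for q
  proof (rule antisym)
    show "mu \<le> card (f (K+k) (J*lam^k + j) ` C q)"
      using mu_le[OF _ idx] KJ(1) q Suc.prems by simp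
    have eq: "f (K+k) (J*lam^k + j) ` C q = f k j ` (f K J ` C q)"
      by (rule img_comp[OF CA KJ(2) kj(2)])
    show "card (f (K+k) (J*lam^k + j) ` C q) \<le> mu"
    proof (cases "q < n")
      case True
      have "card (f k j ` (f K J ` C q)) \<le> card (f K J ` C q)"
        using finC by (intro card_image_le) auto
      then show ?thesis using eq KJ(3) True by simp
    next
      case False
      then have qn: "q = n" using q by simp
      have sub: "f K J ` C q \<subseteq> C s"
      proof
        fix b assume "b \<in> f K J ` C q"
        then obtain a where a: "a \<in> C q" "b = f K J a" by blast
        then show "b \<in> C s" using cls_f[OF _ KJ(2), of a] qn unfolding C_def s_def by auto
      qed
      have "card (f k j ` (f K J ` C q)) \<le> card (f k j ` C s)"
        using sub finC by (intro card_mono) auto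
      then show ?thesis using eq kj(3) by simp
    qed
  qed
  then show ?case using idx KJ(1) by (intro exI[of _ "K+k"] exI[of _ "J*lam^k + j"]) auto
qed

lemma colA: "column_number A lam \<theta> = h * mu"
proof -
  let ?S = "{card (f k j ` A) | k j. k \<ge> 1 \<and> j < lam ^ k}"
  have cn: "column_number A lam \<theta> = Min ?S" unfolding column_number_def f_def[abs_def] ..
  have fin: "finite ?S"
  proof (rule finite_subset[of _ "{..card A}"])
    show "?S \<subseteq> {..card A}" using finA card_image_le by auto
  qed simp
  obtain K J where KJ: "K \<ge> 1" "J < lam^K" "\<forall>q<h. card (f K J ` C q) = mu"
    using good_aux[of h] by auto
  have "Min ?S = h * mu"
  proof (rule Min_eqI[OF fin])
    fix y assume "y \<in> ?S"
    then obtain k j where y: "y = card (f k j ` A)" "k \<ge> 1" "j < lam^k" by auto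
    have "h * mu = (\<Sum>q<h. mu)" by simp
    also have "\<dots> \<le> (\<Sum>q<h. card (f k j ` C q))" using mu_le y by (intro sum_mono) auto
    also have "\<dots> = y" using col_card[OF y(3)] y(1) by simp
    finally show "h * mu \<le> y" .
  next
    have "card (f K J ` A) = h * mu" using col_card[OF KJ(2)] KJ(3) by simp
    then show "h * mu \<in> ?S" using KJ(1,2) by (metis (mono_tags, lifting) mem_Collect_eq)
  qed
  then show ?thesis using cn by simp
qed

abbreviation pb where "pb \<equiv> pure_base lam \<theta> h"
abbreviation B where "B \<equiv> pure_base_alphabet \<theta> a0 h"

lemma pb_props: assumes "length x = h" "set x \<subseteq> A"
  shows "length (pb x) = lam \<and> (\<forall>y\<in>set (pb x). length y = h \<and> set y \<subseteq> A) \<and> concat (pb x) = subst_word \<theta> x"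
proof -
  have L: "length (subst_word \<theta> x) = lam * h" and S: "set (subst_word \<theta> x) \<subseteq> A"
    using sw_props[OF assms(2)] assms(1) by auto
  have "length (take h (drop (j*h) (subst_word \<theta> x))) = h" if "j < lam" for j
  proof -
    have "(j+1)*h \<le> lam*h" using that by (intro mult_right_mono) auto
    then show ?thesis using L by simp
  qed
  moreover have "set (take h (drop (j*h) (subst_word \<theta> x))) \<subseteq> A" for j
    using S set_take_subset set_drop_subset by (metis subset_trans)
  moreover have "concat (pb x) = subst_word \<theta> x"
    unfolding pure_base_def by (rule concat_blocks) (simp add: L mult.commute)
  ultimately show ?thesis unfolding pure_base_def by auto
qed

lemma pbW_step: assumes "\<forall>y\<in>set W. length y = h \<and> set y \<subseteq> A"
  shows "length (concat (map pb W)) = lam * length W \<and> (\<forall>y\<in>set (concat (map pb W)). length y = h \<and> set y \<subseteq> A)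
     \<and> concat (concat (map pb W)) = subst_word \<theta> (concat W)"
  using assms
proof (induction W)
  case Nil then show ?case by simp
next
  case (Cons x W)
  then have x: "length x = h" "set x \<subseteq> A" by auto
  show ?case using Cons pb_props[OF x] by (auto simp: sw_append)
qed

lemma pbW: assumes "length w = h" "set w \<subseteq> A"
  shows "length (subst_iter pb k w) = lam^k \<and> (\<forall>y\<in>set (subst_iter pb k w). length y = h \<and> set y \<subseteq> A)
     \<and> concat (subst_iter pb k w) = (subst_word \<theta> ^^ k) w"
proof (induction k)
  case 0 then show ?case using assms by (simp add: subst_iter_def)
next
  case (Suc k)
  have e: "subst_iter pb (Suc k) w = concat (map pb (subst_iter pb k w))"
    by (simp add: subst_iter_def subst_word_def)
  show ?case unfolding e using pbW_step[of "subst_iter pb k w"] Suc by simp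
qed

lemma pb_col: assumes "length w = h" "set w \<subseteq> A" "j < lam^k"
  shows "subst_iter pb k w ! j = take h (drop (j*h) ((subst_word \<theta> ^^ k) w))"
  using concat_take_block[of "subst_iter pb k w" h j] pbW[OF assms(1,2), of k] assms(3) by simp

definition blk where "blk p = map u [p..<p+h]"

lemma blk_A: "set (blk p) \<subseteq> A" unfolding blk_def using u_A by auto
lemma blk_len: "length (blk p) = h" unfolding blk_def by simp

lemma B_eq: "B = range (\<lambda>m. blk (m*h))"
  unfolding pure_base_alphabet_def blk_def u_def[abs_def] by auto

lemma finB: "finite B"
proof (rule finite_subset)
  show "B \<subseteq> {w. set w \<subseteq> A \<and> length w = h}" unfolding B_eq using blk_A blk_len by auto
  show "finite {w. set w \<subseteq> A \<and> length w = h}" using finA by (rule finite_lists_length_eq)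
qed

lemma swk_blk: "(subst_word \<theta> ^^ k) (blk (m*h)) = map u [m*h*lam^k..<m*h*lam^k + h*lam^k]"
proof (rule nth_equalityI)
  show "length ((subst_word \<theta> ^^ k) (blk (m*h))) = length (map u [m*h*lam^k..<m*h*lam^k + h*lam^k])"
    using swk_props[OF blk_A, of k "m*h"] blk_len by simp
  fix p assume "p < length ((subst_word \<theta> ^^ k) (blk (m*h)))"
  then have p: "p < h*lam^k" using swk_props[OF blk_A, of k "m*h"] blk_len by (simp add: mult.commute)
  define i where "i = p div lam^k"
  define r where "r = p mod lam^k"
  have pe: "p = i*lam^k + r" unfolding i_def r_def by (metis div_mult_mod_eq)
  have r: "r < lam^k" unfolding r_def using lam_pos by simp
  have i: "i < h" unfolding i_def using p by (simp add: less_mult_imp_div_less)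
  have "(subst_word \<theta> ^^ k) (blk (m*h)) ! p = subst_iter \<theta> k (blk (m*h) ! i) ! r"
    unfolding pe by (rule swk_nth) (use blk_A blk_len i r in auto)
  also have "\<dots> = subst_iter \<theta> k (u (m*h + i)) ! r" using i by (simp add: blk_def)
  also have "\<dots> = u ((m*h + i)*lam^k + r)" using u_F1[OF r] by simp
  also have "\<dots> = u (m*h*lam^k + p)" unfolding pe by (simp add: algebra_simps)
  finally show "(subst_word \<theta> ^^ k) (blk (m*h)) ! p = map u [m*h*lam^k..<m*h*lam^k + h*lam^k] ! p"
    using p by simp
qed

lemma T_eq: assumes "j < lam^k"
  shows "(\<lambda>w. subst_iter pb k w ! j) ` B = range (\<lambda>m. blk (m*h*lam^k + j*h))"
proof -
  have "subst_iter pb k (blk (m*h)) ! j = blk (m*h*lam^k + j*h)" for m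
  proof -
    have jh: "j*h + h \<le> h*lam^k" using assms
      by (metis Suc_leI add.commute mult.commute mult_Suc_right mult_le_mono2)
    have "subst_iter pb k (blk (m*h)) ! j = take h (drop (j*h) (map u [m*h*lam^k..<m*h*lam^k + h*lam^k]))"
      using pb_col[OF blk_len blk_A assms] swk_blk by simp
    also have "\<dots> = blk (m*h*lam^k + j*h)" unfolding blk_def using jh
      by (simp add: drop_map take_map add.assoc)
    finally show ?thesis .
  qed
  then show ?thesis unfolding B_eq by (auto simp: image_image)
qed

lemma blk0: "blk p ! 0 = u p" unfolding blk_def using h1 by simp

lemma finT: "finite ((\<lambda>w. subst_iter pb k w ! j) ` B)" using finB by simp

lemma T_lower: assumes "k \<ge> 1" "j < lam^k"
  shows "mu \<le> card ((\<lambda>w. subst_iter pb k w ! j) ` B)"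
proof -
  define N where "N = lam^k"
  define q where "q = (j*h) div N"
  define r where "r = (j*h) mod N"
  have Np: "0 < N" unfolding N_def using lam_pos by simp
  have jh: "j*h = q*N + r" unfolding q_def r_def by (metis div_mult_mod_eq)
  have r: "r < lam^k" unfolding r_def N_def using lam_pos by simp
  have qh: "q < h" unfolding q_def N_def using assms(2) h1
    by (simp add: less_mult_imp_div_less mult.commute)
  have "(\<lambda>b. b!0) ` ((\<lambda>w. subst_iter pb k w ! j) ` B) = (\<lambda>m. u (m*h*N + j*h)) ` UNIV"
    unfolding T_eq[OF assms(2)] N_def by (auto simp: image_image blk0)
  also have "\<dots> = f k r ` C q"
  proof -
    have "u (m*h*N + j*h) = f k r (u (m*h + q))" for m
      using f_u[OF r, of "m*h+q"] jh unfolding N_def by (simp add: algebra_simps)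
    then have "(\<lambda>m. u (m*h*N + j*h)) ` UNIV = f k r ` ((\<lambda>m. u (m*h + q)) ` UNIV)" by (auto simp: image_image)
    moreover have "(\<lambda>m. u (m*h + q)) ` UNIV = C q" using C_mem[OF qh] by auto
    ultimately show ?thesis by simp
  qed
  finally have e: "(\<lambda>b. b!0) ` ((\<lambda>w. subst_iter pb k w ! j) ` B) = f k r ` C q" .
  have "mu \<le> card (f k r ` C q)" using mu_le[OF assms(1) r qh] .
  also have "\<dots> \<le> card ((\<lambda>w. subst_iter pb k w ! j) ` B)" unfolding e[symmetric]
    using finT by (rule card_image_le)
  finally show ?thesis .
qed

lemma T_upper: "\<exists>K J. K \<ge> 1 \<and> J < lam^K \<and> card ((\<lambda>w. subst_iter pb K w ! J) ` B) \<le> mu"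
proof -
  obtain k j where kj: "k \<ge> 1" "j < lam^k" "card (f k j ` C 0) = mu" using mu_all[of 0] h1 by auto
  define l where "l = Suc h"
  define M where "M = lam^l"
  have M2: "2*h < M"
  proof -
    have "h < 2^h" by (rule less_exp)
    then have "2*h < 2^Suc h" by simp
    also have "\<dots> \<le> lam^Suc h" using lam2 by (intro power_mono) auto
    finally show ?thesis unfolding M_def l_def .
  qed
  define x where "x = j*M"
  define J where "J = (x + h - 1) div h"
  have J1: "x \<le> J*h" and J2: "J*h + h \<le> x + M"
  proof -
    have a: "x + h - 1 = J*h + (x + h - 1) mod h" unfolding J_def by (metis div_mult_mod_eq)
    have b: "(x + h - 1) mod h < h" using h1 by simp
    show "x \<le> J*h" using a b by linarith
    show "J*h + h \<le> x + M" using a M2 h1 by linarith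
  qed
  define s0 where "s0 = J*h - x"
  have s0: "J*h = x + s0" "s0 + h \<le> M" using J1 J2 unfolding s0_def by auto
  define K where "K = k + l"
  have lamK: "lam^K = lam^k * M" unfolding K_def M_def by (simp add: power_add)
  have JK: "J < lam^K"
  proof -
    have "J*h + h \<le> (j+1)*M" using J2 unfolding x_def by simp
    also have "\<dots> \<le> lam^k * M" using kj(2) by (intro mult_right_mono) auto
    finally have c: "J*h + h \<le> lam^K" using lamK by simp
    have "J \<le> J*h" using h1 by simp
    then show ?thesis using c h1 by linarith
  qed
  define G where "G a = map (\<lambda>t. subst_iter \<theta> l a ! (s0 + t)) [0..<h]" for a
  have blkG: "blk (m*h*lam^K + J*h) = G (f k j (u (m*h)))" for m
  proof (rule nth_equalityI)
    show "length (blk (m*h*lam^K + J*h)) = length (G (f k j (u (m*h))))" by (simp add: blk_len G_def)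
    fix t assume "t < length (blk (m*h*lam^K + J*h))"
    then have t: "t < h" by (simp add: blk_len)
    have st: "s0 + t < lam^l" using s0 t unfolding M_def by simp
    have "blk (m*h*lam^K + J*h) ! t = u (m*h*lam^K + J*h + t)" unfolding blk_def using t by simp
    also have "m*h*lam^K + J*h + t = (m*h*lam^k + j)*lam^l + (s0 + t)"
      unfolding lamK s0(1) x_def M_def by (simp add: algebra_simps)
    also have "u \<dots> = subst_iter \<theta> l (u (m*h*lam^k + j)) ! (s0 + t)" by (rule u_F1[OF st])
    also have "\<dots> = G (f k j (u (m*h))) ! t" unfolding G_def using f_u[OF kj(2), of "m*h"] t by simp
    finally show "blk (m*h*lam^K + J*h) ! t = G (f k j (u (m*h))) ! t" .
  qed
  have sub: "(\<lambda>w. subst_iter pb K w ! J) ` B \<subseteq> G ` (f k j ` C 0)"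
  proof
    fix b assume "b \<in> (\<lambda>w. subst_iter pb K w ! J) ` B"
    then obtain m where m: "b = blk (m*h*lam^K + J*h)" unfolding T_eq[OF JK] by auto
    have "u (m*h) \<in> C 0" using C_mem[of 0] h1 by auto
    then show "b \<in> G ` (f k j ` C 0)" using m blkG by auto
  qed
  have "card ((\<lambda>w. subst_iter pb K w ! J) ` B) \<le> card (G ` (f k j ` C 0))"
    using sub finC by (intro card_mono) auto
  also have "\<dots> \<le> card (f k j ` C 0)" using finC by (intro card_image_le) auto
  finally show ?thesis using JK kj unfolding K_def by (intro exI[of _ "k+l"] exI[of _ J]) auto
qed

lemma colB: "column_number B lam pb = mu"
proof -
  let ?S = "{card ((\<lambda>a. subst_iter pb k a ! j) ` B) | k j. k \<ge> 1 \<and> j < lam ^ k}"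
  have fin: "finite ?S"
  proof (rule finite_subset[of _ "{..card B}"])
    show "?S \<subseteq> {..card B}" using finB card_image_le by auto
  qed simp
  obtain K J where KJ: "K \<ge> 1" "J < lam^K" "card ((\<lambda>w. subst_iter pb K w ! J) ` B) \<le> mu"
    using T_upper by blast
  have "Min ?S = mu"
  proof (rule antisym)
    have "card ((\<lambda>w. subst_iter pb K w ! J) ` B) \<in> ?S" using KJ(1,2) by blast
    then have "Min ?S \<le> card ((\<lambda>w. subst_iter pb K w ! J) ` B)" using fin by (rule Min_le[rotated])
    then show "Min ?S \<le> mu" using KJ(3) by simp
    have "?S \<noteq> {}" using KJ(1,2) by blast
    then show "mu \<le> Min ?S" using fin T_lower by (subst Min_ge_iff) auto
  qed
  then show ?thesis unfolding column_number_def .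
qed

theorem main: "column_number A lam \<theta> = height lam \<theta> a0 *
           column_number (pure_base_alphabet \<theta> a0 (height lam \<theta> a0)) lam
                         (pure_base lam \<theta> (height lam \<theta> a0))
         \<and> height lam \<theta> a0 dvd column_number A lam \<theta>"
  using colA colB unfolding h_def[symmetric] by simp

end

theorem mainTheorem6:
  fixes A :: "'a set" and lam :: nat and \<theta> :: "'a \<Rightarrow> 'a list" and a0 :: 'a
  assumes "primitive_subst A lam \<theta>"
    and "a0 \<in> A" and "\<theta> a0 ! 0 = a0"
    and "inj_on \<theta> A"
    and "infinite (subshift A \<theta>)"
  shows "column_number A lam \<theta> =
           height lam \<theta> a0 *
           column_number (pure_base_alphabet \<theta> a0 (height lam \<theta> a0)) lam
                         (pure_base lam \<theta> (height lam \<theta> a0))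
         \<and> height lam \<theta> a0 dvd column_number A lam \<theta>"
proof -
  interpret csub A lam \<theta> a0 using assms(1-3) by unfold_locales
  show ?thesis by (rule main)
qed

end
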